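(* Let $n\ge 2$. Then \[ R_n=\inf_{\mathbb{P}\in\mathcal{C}_n}\ \sup_{x,y\in\mathbb{R}_{++}}\phi^{\mathbb{P}}(x,y). \]
   Context: Scheduling on two machines with $n$ tasks. A processing-time matrix is $T=(T_{ij})\in\mathbb{R}_{++}^{2\times n}$ ($T_{ij}$ is the time of task $j$ on machine $i$). An allocation is $X\in\{0,1\}^{2\times n}$ with $X_{1j}+X_{2j}=1$ for every $j$ (task $j$ is processed on machine $i$ iff $X_{ij}=1$). The makespan is $M(X,T)=\max_{i\in\{1,2\}}\sum_{j=1}^n X_{ij}T_{ij}$, and $M^*(T)=\min_X M(X,T)$ over all allocations. Let $\mathcal{P}_n$ be the set of Borel probability measures on $\mathbb{R}^n$ with support contained in $\mathbb{R}_{++}^n$. For $\mathbb{P}\in\mathcal{P}_n$, the randomized algorithm $\mathcal{A}^{\mathbb{P}}$ draws $\mathbf{z}=(z_1,\dots,z_n)\sim\mathbb{P}$ and, for each $j$, assigns task $j$ to machine 1 if $T_{1j}/T_{2j}<z_j$ and to machine 2 otherwise; let $X^{\mathbb{P},T}$ be the resulting random allocation. Define $M(\mathbb{P},T)=\mathbf{E}_{\mathbf{z}\sim\mathbb{P}}\,M(X^{\mathbb{P},T},T)$, $R_n(\mathbb{P},T)=M(\mathbb{P},T)/M^*(T)$, $R_n(\mathbb{P})=\sup_{T\in\mathbb{R}_{++}^{2\times n}}R_n(\mathbb{P},T)\in[1,\infty]$, and $R_n=\inf_{\mathbb{P}\in\mathcal{P}_n}R_n(\mathbb{P})$. Let $\mathcal{C}_n\subseteq\mathcal{P}_n$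 be the set of measures invariant under permutations of coordinates: for every permutation $\pi$ of $[n]$, if $\mathbf{z}\sim\mathbb{P}$ then $(z_{\pi(1)},\dots,z_{\pi(n)})\sim\mathbb{P}$. For $\mathbb{P}\in\mathcal{C}_n$ let $F_{\mathbb{P}}(x)=\mathbf{P}_{\mathbf{z}\sim\mathbb{P}}[z_1\le x]$ (the common univariate marginal CDF) and $H_{\mathbb{P}}(x,y)=\mathbf{P}_{\mathbf{z}\sim\mathbb{P}}[z_1\le x,\,z_2\le y]$ (the common bivariate marginal CDF), and define for $x,y>0$ \[ \phi^{\mathbb{P}}(x,y)=1+y-\min\{1,\,1-\tfrac1x+y\}F_{\mathbb{P}}(x)-yF_{\mathbb{P}}(y)+\min\{1+\tfrac1x,\,1+y\}H_{\mathbb{P}}(x,y). \] *)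

theory Defs
  imports "HOL-Probability.Probability"
begin

text \<open>Points of R^n are vectors real^'n, with 'n a finite index type (n = CARD('n)).\<close>

definition orthant :: "(real^'n) set" where
  "orthant = {z. \<forall>i. 0 < z $ i}"

definition msupp :: "(real^'n) measure \<Rightarrow> (real^'n) set" where
  "msupp M = {x. \<forall>e>0. emeasure M (ball x e) > 0}"

definition Pn :: "(real^'n) measure set" where
  "Pn = {M. prob_space M \<and> sets M = sets borel \<and> msupp M \<subseteq> orthant}"

definition Cn :: "(real^'n) measure set" where
  "Cn = {M \<in> Pn. \<forall>\<pi>. \<pi> permutes (UNIV :: 'n set) \<longrightarrow>
          distr M borel (\<lambda>z. \<chi> i. z $ \<pi> i) = M}"

text \<open>An allocation is encoded as X :: 'n \<Rightarrow> bool: X j iff task j is on machine 1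
  (X_{1j} = 1), otherwise on machine 2. Processing times: t1 = row 1, t2 = row 2 of T.\<close>
definition makespan :: "('n::finite \<Rightarrow> bool) \<Rightarrow> real^'n \<Rightarrow> real^'n \<Rightarrow> real" where
  "makespan X t1 t2 = max (\<Sum>j\<in>{j. X j}. t1 $ j) (\<Sum>j\<in>{j. \<not> X j}. t2 $ j)"

definition opt_makespan :: "real^'n::finite \<Rightarrow> real^'n \<Rightarrow> real" where
  "opt_makespan t1 t2 = Min (range (\<lambda>X. makespan X t1 t2))"

definition alg_alloc :: "real^'n \<Rightarrow> real^'n \<Rightarrow> real^'n \<Rightarrow> ('n \<Rightarrow> bool)" where
  "alg_alloc t1 t2 z = (\<lambda>j. t1 $ j / t2 $ j < z $ j)"

definition alg_makespan :: "(real^'n::finite) measure \<Rightarrow> real^'n \<Rightarrow> real^'n \<Rightarrow> real" where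
  "alg_makespan M t1 t2 = (\<integral>z. makespan (alg_alloc t1 t2 z) t1 t2 \<partial>M)"

definition pos_inst :: "((real^'n) \<times> (real^'n)) set" where
  "pos_inst = {(t1, t2). (\<forall>j. 0 < t1 $ j) \<and> (\<forall>j. 0 < t2 $ j)}"

definition worst_ratio :: "(real^'n::finite) measure \<Rightarrow> ereal" where
  "worst_ratio M = (SUP p \<in> pos_inst. ereal (alg_makespan M (fst p) (snd p) / opt_makespan (fst p) (snd p)))"

definition Rn :: "'n::finite itself \<Rightarrow> ereal" where
  "Rn _ = (INF M \<in> (Pn :: (real^'n) measure set). worst_ratio M)"

text \<open>Two fixed distinct coordinates (playing the roles of coordinates 1 and 2).\<close>
definition idx1 :: 'n where "idx1 = (SOME i. True)"
definition idx2 :: 'n where "idx2 = (SOME j. j \<noteq> idx1)"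

definition Fm :: "(real^'n) measure \<Rightarrow> real \<Rightarrow> real" where
  "Fm M x = measure M {z. z $ idx1 \<le> x}"

definition Hm :: "(real^'n) measure \<Rightarrow> real \<Rightarrow> real \<Rightarrow> real" where
  "Hm M x y = measure M {z. z $ idx1 \<le> x \<and> z $ idx2 \<le> y}"

definition phi :: "(real^'n) measure \<Rightarrow> real \<Rightarrow> real \<Rightarrow> real" where
  "phi M x y = 1 + y - min 1 (1 - 1/x + y) * Fm M x - y * Fm M y
                 + min (1 + 1/x) (1 + y) * Hm M x y"

end

theory Submission
  imports Defs
begin

definition permv :: "('n \<Rightarrow> 'n) \<Rightarrow> real^'n \<Rightarrow> real^'n" where
  "permv p z = (\<chi> i. z $ p i)"

definition psi :: "(real^'n) measure \<Rightarrow> 'n \<Rightarrow> 'n \<Rightarrow> real \<Rightarrow> real \<Rightarrow> real" where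
  "psi M j k x y = 1 + y - min 1 (1 - 1/x + y) * measure M {z. z$j \<le> x}
     - y * measure M {z. z$k \<le> y} + min (1+1/x) (1+y) * measure M {z. z$j \<le> x \<and> z$k \<le> y}"

definition gpair :: "real \<Rightarrow> real \<Rightarrow> real \<Rightarrow> real \<Rightarrow> real" where
  "gpair x y a b = max ((if x < a then 1 else 0) + (if y < b then y else 0))
                       ((if x < a then 0 else 1/x) + (if y < b then 0 else 1))"

lemma gpair_decomp:
  assumes "x > 0" "y > 0" "a = w$j" "b = w$k"
  shows "gpair x y a b = 1 + y - min 1 (1 - 1/x + y) * indicator {z::real^'n. z$j \<le> x} w
     - y * indicator {z::real^'n. z$k \<le> y} w + min (1+1/x) (1+y) * indicator {z::real^'n. z$j \<le> x \<and> z$k \<le> y} w"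
  using assms by (auto simp: gpair_def indicator_def min_def max_def field_simps)

lemma sets_le1[measurable]: "{z::real^'n. z$j \<le> x} \<in> sets borel"
  by measurable
lemma sets_le2[measurable]: "{z::real^'n. z$j \<le> x \<and> z$k \<le> y} \<in> sets borel"
  by measurable

lemma integral_gpair:
  assumes "prob_space M" "sets M = sets borel" "x > 0" "y > 0"
  shows "(\<integral>z. gpair x y (z$j) (z$k) \<partial>M) = psi M j k x y"
proof -
  interpret prob_space M by fact
  have ms: "{z. z$j \<le> x} \<in> sets M" "{z. z$k \<le> y} \<in> sets M"
     "{z. z$j \<le> x \<and> z$k \<le> y} \<in> sets M" using assms(2) by auto
  have "(\<integral>z. gpair x y (z$j) (z$k) \<partial>M) = (\<integral>z. 1 + y - min 1 (1 - 1/x + y) * indicator {z. z$j \<le> x} z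
     - y * indicator {z. z$k \<le> y} z + min (1+1/x) (1+y) * indicator {z. z$j \<le> x \<and> z$k \<le> y} z \<partial>M)"
    by (rule Bochner_Integration.integral_cong[OF refl], rule gpair_decomp[OF assms(3,4) refl refl])
  also have "\<dots> = psi M j k x y"
    using ms unfolding psi_def
    by (simp add: emeasure_eq_measure prob_space)
  finally show ?thesis .
qed

lemma sum_Collect_if: "(\<Sum>j\<in>{j. X j}. f j) = (\<Sum>j\<in>UNIV. if X j then f j else (0::real))"
  for X :: "'n::finite \<Rightarrow> bool"
  by (simp add: sum.If_cases)

lemma makespan_alt: "makespan X t1 t2 = max (\<Sum>j\<in>UNIV. if X j then t1$j else 0) (\<Sum>j\<in>UNIV. if X j then 0 else t2$j)"
  unfolding makespan_def by (simp add: sum.If_cases Collect_neg_eq)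

lemma makespan_alg_meas[measurable]:
  "(\<lambda>z. makespan (alg_alloc t1 t2 z) t1 t2) \<in> borel_measurable borel"
  unfolding makespan_alt alg_alloc_def by measurable

lemma makespan_alg_integrable:
  assumes "prob_space M" "sets M = sets borel"
  shows "integrable M (\<lambda>z. makespan (alg_alloc t1 t2 z) t1 t2)"
proof -
  interpret prob_space M by fact
  have b: "norm (makespan X t1 t2) \<le> (\<Sum>j\<in>UNIV. \<bar>t1$j\<bar>) + (\<Sum>j\<in>UNIV. \<bar>t2$j\<bar>)" for X
  proof -
    have "\<bar>\<Sum>j\<in>UNIV. if X j then t1$j else 0\<bar> \<le> (\<Sum>j\<in>UNIV. \<bar>t1$j\<bar>)"
      by (rule order_trans[OF sum_abs]) (rule sum_mono, auto)
    moreover have "\<bar>\<Sum>j\<in>UNIV. if X j then 0 else t2$j\<bar> \<le> (\<Sum>j\<in>UNIV. \<bar>t2$j\<bar>)"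
      by (rule order_trans[OF sum_abs]) (rule sum_mono, auto)
    moreover have "0 \<le> (\<Sum>j\<in>UNIV. \<bar>t1$j\<bar>)" "0 \<le> (\<Sum>j\<in>UNIV. \<bar>t2$j\<bar>)" by (auto intro: sum_nonneg)
    ultimately show ?thesis unfolding makespan_alt by auto
  qed
  show ?thesis
    by (rule integrable_const_bound[where B="(\<Sum>j\<in>UNIV. \<bar>t1$j\<bar>) + (\<Sum>j\<in>UNIV. \<bar>t2$j\<bar>)"])
       (use b assms(2) in auto)
qed

lemma opt_le: "opt_makespan t1 t2 \<le> makespan X t1 t2"
  unfolding opt_makespan_def by (rule Min_le) auto

lemma opt_attained: "\<exists>X. opt_makespan t1 t2 = makespan X t1 t2"
proof -
  have "opt_makespan t1 t2 \<in> range (\<lambda>X. makespan X t1 t2)"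
    unfolding opt_makespan_def by (rule Min_in) auto
  then show ?thesis by auto
qed

lemma makespan_pos:
  assumes "\<forall>j. 0 < t1 $ j" "\<forall>j. 0 < t2 $ j"
  shows "0 < makespan X t1 t2"
proof (cases "\<exists>j. X j")
  case True
  then obtain j where "X j" by auto
  then have "0 < (\<Sum>j\<in>{j. X j}. t1 $ j)" using assms by (intro sum_pos) auto
  then show ?thesis unfolding makespan_def by auto
next
  case False
  then have "{j. \<not> X j} = UNIV" by auto
  then have "0 < (\<Sum>j\<in>{j. \<not> X j}. t2 $ j)" using assms by (simp add: sum_pos)
  then show ?thesis unfolding makespan_def by auto
qed

lemma opt_pos:
  assumes "\<forall>j. 0 < t1 $ j" "\<forall>j. 0 < t2 $ j"
  shows "0 < opt_makespan t1 t2"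
  using opt_attained[of t1 t2] makespan_pos[OF assms] by metis

lemma gpair_nonneg: "x > 0 \<Longrightarrow> y > 0 \<Longrightarrow> 0 \<le> gpair x y a b"
  unfolding gpair_def by (auto simp: max_def)

lemma gpair_meas[measurable]: "(\<lambda>z::real^'n. gpair x y (z$j) (z$k)) \<in> borel_measurable borel"
  unfolding gpair_def by measurable

lemma gpair_integrable:
  assumes "prob_space M" "sets M = sets borel" "x > 0" "y > 0"
  shows "integrable M (\<lambda>z::real^'n. gpair x y (z$j) (z$k))"
proof -
  interpret prob_space M by fact
  have "\<bar>gpair x y a b\<bar> \<le> 1 + y + 1/x + 1" for a b
    using assms(3,4) unfolding gpair_def by (auto simp: max_def)
  then show ?thesis
    by (intro integrable_const_bound[where B="1 + y + 1/x + 1"])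
       (auto simp: measurable_cong_sets[OF assms(2) refl])
qed

lemma sum_ge_two:
  fixes h :: "'n::finite \<Rightarrow> real"
  assumes "\<And>i. 0 \<le> h i" "j \<noteq> k"
  shows "h j + h k \<le> (\<Sum>i\<in>UNIV. h i)"
proof -
  have "(\<Sum>i\<in>{j,k}. h i) \<le> (\<Sum>i\<in>UNIV. h i)" by (rule sum_mono2) (use assms in auto)
  then show ?thesis using assms by simp
qed

lemma psi_le_worst:
  fixes P :: "(real^'n::finite) measure"
  assumes "prob_space P" "sets P = sets borel" "j \<noteq> k" "x > 0" "y > 0"
  shows "ereal (psi P j k x y) \<le> worst_ratio P"
proof -
  interpret prob_space P by fact
  define N where "N = real CARD('n)"
  have N: "N > 0" unfolding N_def by simp
  have psi0: "0 \<le> psi P j k x y"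
    using integral_gpair[OF assms(1,2,4,5), of j k, symmetric] gpair_nonneg[OF assms(4,5)]
    by (simp add: integral_nonneg)
  have key: "psi P j k x y \<le> ratio * (1 + N * d)" if d: "d > 0" and
       rdef: "ratio = alg_makespan P (\<chi> i. if i = j then 1 else if i = k then y else d)
               (\<chi> i. if i = j then 1/x else if i = k then 1 else d) /
               opt_makespan (\<chi> i. if i = j then 1 else if i = k then y else d)
               (\<chi> i. if i = j then 1/x else if i = k then 1 else d)" for d ratio
  proof -
    define t1 :: "real^'n" where "t1 = (\<chi> i. if i = j then 1 else if i = k then y else d)"
    define t2 :: "real^'n" where "t2 = (\<chi> i. if i = j then 1/x else if i = k then 1 else d)"
    have pos1: "\<forall>i. 0 < t1 $ i" and pos2: "\<forall>i. 0 < t2 $ i"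
      unfolding t1_def t2_def using assms d by auto
    have r: "ratio = alg_makespan P t1 t2 / opt_makespan t1 t2" unfolding rdef t1_def t2_def ..
    have pw: "gpair x y (z$j) (z$k) \<le> makespan (alg_alloc t1 t2 z) t1 t2" for z
    proof -
      have rj: "t1$j / t2$j = x" and rk: "t1$k/t2$k = y" and e: "t1$j = 1" "t2$j = 1/x" "t1$k = y" "t2$k = 1"
        unfolding t1_def t2_def using assms by auto
      let ?X = "alg_alloc t1 t2 z"
      have ax: "?X j = (x < z$j)" "?X k = (y < z$k)" using rj rk by (simp_all add: alg_alloc_def)
      have "(if ?X j then t1$j else 0) + (if ?X k then t1$k else 0) \<le> (\<Sum>i\<in>UNIV. if ?X i then t1$i else 0)"
        by (rule sum_ge_two) (use pos1 assms(3) in \<open>auto intro: less_imp_le\<close>)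
      then have h1: "(if x < z$j then 1 else 0) + (if y < z$k then y else 0) \<le> (\<Sum>i\<in>UNIV. if ?X i then t1$i else 0)"
        by (simp only: ax e)
      have "(if ?X j then 0 else t2$j) + (if ?X k then 0 else t2$k) \<le> (\<Sum>i\<in>UNIV. if ?X i then 0 else t2$i)"
        by (rule sum_ge_two) (use pos2 assms(3) in \<open>auto intro: less_imp_le\<close>)
      then have h2: "(if x < z$j then 0 else 1/x) + (if y < z$k then 0 else 1) \<le> (\<Sum>i\<in>UNIV. if ?X i then 0 else t2$i)"
        by (simp only: ax e)
      show ?thesis
        unfolding makespan_alt gpair_def by (rule max.mono[OF h1 h2])
    qed
    have alg: "psi P j k x y \<le> alg_makespan P t1 t2"
      unfolding alg_makespan_def integral_gpair[OF assms(1,2,4,5), of j k, symmetric]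
      by (rule integral_mono[OF _ makespan_alg_integrable[OF assms(1,2)] pw])
         (rule gpair_integrable[OF assms(1,2,4,5)])
    have opt0: "0 < opt_makespan t1 t2" by (rule opt_pos[OF pos1 pos2])
    have optle: "opt_makespan t1 t2 \<le> 1 + N * d"
    proof -
      have "opt_makespan t1 t2 \<le> makespan (\<lambda>i. i \<noteq> k) t1 t2" by (rule opt_le)
      also have "\<dots> \<le> 1 + N * d"
      proof -
        have "(\<Sum>i\<in>{i. i \<noteq> k}. t1$i) \<le> (\<Sum>i\<in>{i. i \<noteq> k}. (if i = j then 1 else 0) + d)"
          by (rule sum_mono) (use \<open>d > 0\<close> in \<open>auto simp: t1_def\<close>)
        also have "\<dots> \<le> (\<Sum>i\<in>UNIV. (if i = j then 1 else 0) + d)"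
          by (rule sum_mono2) (use \<open>d > 0\<close> in auto)
        also have "\<dots> = 1 + N * d" by (simp add: sum.distrib N_def)
        finally have a: "(\<Sum>i\<in>{i. i \<noteq> k}. t1$i) \<le> 1 + N * d" .
        have "{i. \<not> i \<noteq> k} = {k}" by auto
        then have b: "(\<Sum>i\<in>{i. \<not> i \<noteq> k}. t2$i) = 1" using assms(3) by (simp add: t2_def)
        show ?thesis unfolding makespan_def using a b N d by (simp add: mult_nonneg_nonneg)
      qed
      finally show ?thesis .
    qed
    have "0 \<le> ratio" unfolding r using alg psi0 opt0 by simp
    have "psi P j k x y \<le> ratio * opt_makespan t1 t2" using alg opt0 unfolding r by simp
    also have "\<dots> \<le> ratio * (1 + N * d)" using optle \<open>0 \<le> ratio\<close> by (rule mult_left_mono)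
    finally show ?thesis .
  qed
  have inst: "ereal (alg_makespan P t1 t2 / opt_makespan t1 t2) \<le> worst_ratio P"
    if "\<forall>i. 0 < t1 $ i" "\<forall>i. 0 < t2 $ i" for t1 t2
    unfolding worst_ratio_def
    by (rule SUP_upper2[where i="(t1,t2)"]) (use that in \<open>auto simp: pos_inst_def\<close>)
  define R where "R d = alg_makespan P (\<chi> i. if i = j then 1 else if i = k then y else d)
               (\<chi> i. if i = j then 1/x else if i = k then 1 else d) /
               opt_makespan (\<chi> i. if i = j then 1 else if i = k then y else d)
               (\<chi> i. if i = j then 1/x else if i = k then 1 else (d::real))" for d
  have RW: "ereal (R d) \<le> worst_ratio P" if "d > 0" for d
    unfolding R_def by (rule inst) (use that assms in auto)
  have Rk: "psi P j k x y \<le> R d * (1 + N * d)" if "d > 0" for d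
    using key[OF that R_def] .
  show ?thesis
  proof (cases "worst_ratio P")
    case (real w)
    have "psi P j k x y \<le> w + e" if e: "e > 0" for e
    proof (cases "w \<le> 0")
      case True
      have "psi P j k x y \<le> R 1 * (1 + N * 1)" by (rule Rk) simp
      also have "\<dots> \<le> w * (1 + N * 1)" using RW[of 1] real N by (intro mult_right_mono) auto
      also have "\<dots> \<le> w + e" using True N e mult_nonneg_nonpos[of N w] by (simp add: algebra_simps)
      finally show ?thesis .
    next
      case False
      define d where "d = e / (w * N)"
      have d0: "d > 0" unfolding d_def using False N e by simp
      have "psi P j k x y \<le> R d * (1 + N * d)" by (rule Rk[OF d0])
      also have "\<dots> \<le> w * (1 + N * d)" using RW[OF d0] real N d0
        by (intro mult_right_mono) auto
      also have "\<dots> = w + e" using False N unfolding d_def by (simp add: field_simps)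
      finally show ?thesis .
    qed
    then have "psi P j k x y \<le> w" by (rule field_le_epsilon)
    then show ?thesis using real by simp
  next
    case PInf
    then show ?thesis by simp
  next
    case MInf
    then show ?thesis using RW[of 1] by simp
  qed
qed

lemma pointwise_general:
  fixes w c d :: "'n::finite \<Rightarrow> 'n \<Rightarrow> real" and p q al be ga de :: "'n \<Rightarrow> real" and g :: "'n \<Rightarrow> 'n \<Rightarrow> real"
  assumes w0: "\<And>j k. 0 \<le> w j k" and c: "\<And>j k. 0 \<le> c j k \<and> c j k \<le> m"
      and d: "\<And>j k. 0 \<le> d j k \<and> d j k \<le> m"
      and cp: "\<And>j. (\<Sum>k\<in>UNIV. w j k * c j k) = p j"
      and dq: "\<And>k. (\<Sum>j\<in>UNIV. w j k * d j k) = q k"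
      and nn: "\<And>j. 0 \<le> al j \<and> 0 \<le> be j \<and> 0 \<le> ga j \<and> 0 \<le> de j"
      and g: "\<And>j k. al j + be k \<le> g j k \<and> ga j + de k \<le> g j k"
  shows "max (\<Sum>i\<in>UNIV. p i * al i + q i * be i) (\<Sum>i\<in>UNIV. p i * ga i + q i * de i)
         \<le> m * (\<Sum>j\<in>UNIV. \<Sum>k\<in>UNIV. w j k * g j k)"
proof -
  have gen: "(\<Sum>i\<in>UNIV. p i * f1 i + q i * f2 i) \<le> m * (\<Sum>j\<in>UNIV. \<Sum>k\<in>UNIV. w j k * g j k)"
    if f: "\<And>j. 0 \<le> f1 j \<and> 0 \<le> f2 j" "\<And>j k. f1 j + f2 k \<le> g j k" for f1 f2
  proof -
    have "(\<Sum>i\<in>UNIV. p i * f1 i + q i * f2 i) = (\<Sum>i\<in>UNIV. p i * f1 i) + (\<Sum>i\<in>UNIV. q i * f2 i)"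
      by (simp add: sum.distrib)
    also have "(\<Sum>i\<in>UNIV. p i * f1 i) = (\<Sum>j\<in>UNIV. \<Sum>k\<in>UNIV. w j k * c j k * f1 j)"
      by (simp add: cp[symmetric] sum_distrib_right)
    also have "(\<Sum>i\<in>UNIV. q i * f2 i) = (\<Sum>j\<in>UNIV. \<Sum>k\<in>UNIV. w j k * d j k * f2 k)"
      by (simp add: dq[symmetric] sum_distrib_right) (rule sum.swap)
    also have "(\<Sum>j\<in>UNIV. \<Sum>k\<in>UNIV. w j k * c j k * f1 j) + (\<Sum>j\<in>UNIV. \<Sum>k\<in>UNIV. w j k * d j k * f2 k)
        = (\<Sum>j\<in>UNIV. \<Sum>k\<in>UNIV. w j k * (c j k * f1 j + d j k * f2 k))"
      by (simp add: sum.distrib algebra_simps)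
    also have "\<dots> \<le> (\<Sum>j\<in>UNIV. \<Sum>k\<in>UNIV. w j k * (m * g j k))"
    proof (intro sum_mono mult_left_mono w0)
      fix j k
      have "c j k * f1 j \<le> m * f1 j" using c[of j k] f(1)[of j] by (intro mult_right_mono) auto
      moreover have "d j k * f2 k \<le> m * f2 k" using d[of j k] f(1)[of k] by (intro mult_right_mono) auto
      moreover have "m * (f1 j + f2 k) \<le> m * g j k" using f(2)[of j k] c[of j k] by (intro mult_left_mono) auto
      ultimately show "c j k * f1 j + d j k * f2 k \<le> m * g j k" by (simp add: algebra_simps)
    qed
    also have "\<dots> = m * (\<Sum>j\<in>UNIV. \<Sum>k\<in>UNIV. w j k * g j k)"
      by (simp add: sum_distrib_left algebra_simps)
    finally show ?thesis .
  qed
  show ?thesis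
    using gen[of al be] gen[of ga de] nn g by auto
qed

lemma upper_bound:
  fixes P :: "(real^'n::finite) measure" and t1 t2 :: "real^'n"
  assumes prob: "prob_space P" and sP: "sets P = sets borel" and i12: "idx1 \<noteq> (idx2::'n)"
    and H: "\<And>j k x y. j \<noteq> k \<Longrightarrow> x > 0 \<Longrightarrow> y > 0 \<Longrightarrow> psi P j k x y = phi P x y"
    and pos1: "\<forall>i. 0 < t1 $ i" and pos2: "\<forall>i. 0 < t2 $ i"
  shows "ereal (alg_makespan P t1 t2 / opt_makespan t1 t2)
          \<le> (SUP p\<in>{0<..}\<times>{0<..}. ereal (phi P (fst p) (snd p)))"
proof -
  interpret prob_space P by fact
  obtain X where X: "opt_makespan t1 t2 = makespan X t1 t2" using opt_attained by blast
  define m where "m = opt_makespan t1 t2"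
  have m0: "0 < m" unfolding m_def by (rule opt_pos[OF pos1 pos2])
  define r where "r i = t1$i / t2$i" for i
  have r0: "0 < r i" for i unfolding r_def using pos1 pos2 by auto
  define p where "p i = (if X i then t1$i else 0)" for i
  define q where "q i = (if X i then 0 else t2$i)" for i
  define Pp where "Pp = (\<Sum>i\<in>UNIV. p i)"
  define Qq where "Qq = (\<Sum>i\<in>UNIV. q i)"
  have p0: "0 \<le> p i" and q0: "0 \<le> q i" for i unfolding p_def q_def using pos1 pos2 by (auto intro: less_imp_le)
  have pq: "p i * q i = 0" for i unfolding p_def q_def by auto
  have mPQ: "m = max Pp Qq" unfolding m_def X makespan_alt Pp_def Qq_def p_def q_def ..
  define sg :: "'n \<Rightarrow> 'n" where "sg j = (if j = idx1 then idx2 else idx1)" for j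
  have sg: "sg j \<noteq> j" for j unfolding sg_def using i12 by auto
  have Pp0: "0 \<le> Pp" "0 \<le> Qq" unfolding Pp_def Qq_def using p0 q0 by (auto intro: sum_nonneg)
  obtain w c d :: "'n \<Rightarrow> 'n \<Rightarrow> real" where
      w0: "\<And>j k. 0 \<le> w j k" and c: "\<And>j k. 0 \<le> c j k \<and> c j k \<le> m"
      and d: "\<And>j k. 0 \<le> d j k \<and> d j k \<le> m"
      and cp: "\<And>j. (\<Sum>k\<in>UNIV. w j k * c j k) = p j"
      and dq: "\<And>k. (\<Sum>j\<in>UNIV. w j k * d j k) = q k"
      and wjk: "\<And>j k. w j k \<noteq> 0 \<Longrightarrow> j \<noteq> k"
      and wsum: "(\<Sum>j\<in>UNIV. \<Sum>k\<in>UNIV. w j k) = 1"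
  proof (cases "Pp > 0 \<and> Qq > 0")
    case True
    show ?thesis
    proof (rule that[of "\<lambda>j k. p j * q k / (Pp * Qq)" "\<lambda>j k. Pp" "\<lambda>j k. Qq"])
      show "\<And>j k. 0 \<le> p j * q k / (Pp * Qq)" using p0 q0 Pp0 by simp
      show "\<And>j k. 0 \<le> Pp \<and> Pp \<le> m" "\<And>j k. 0 \<le> Qq \<and> Qq \<le> m" using Pp0 mPQ by auto
      show "(\<Sum>k\<in>UNIV. p j * q k / (Pp * Qq) * Pp) = p j" for j
        using True by (simp add: sum_divide_distrib[symmetric] sum_distrib_left[symmetric] Qq_def)
      show "(\<Sum>j\<in>UNIV. p j * q k / (Pp * Qq) * Qq) = q k" for k
        using True by (simp add: sum_divide_distrib[symmetric] sum_distrib_right[symmetric] Pp_def)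
      show "p j * q k / (Pp * Qq) \<noteq> 0 \<Longrightarrow> j \<noteq> k" for j k using pq[of j] by auto
      show "(\<Sum>j\<in>UNIV. \<Sum>k\<in>UNIV. p j * q k / (Pp * Qq)) = 1"
        using True by (simp add: sum_divide_distrib[symmetric] sum_distrib_right[symmetric]
             sum_distrib_left[symmetric] Pp_def[symmetric] Qq_def[symmetric])
    qed
  next
    case False
    show ?thesis
    proof (cases "Qq = 0")
      case Q: True
      have Pm: "Pp = m" "Pp > 0" using Q mPQ m0 Pp0 by auto
      have qz: "q k = 0" for k using Q q0 unfolding Qq_def by (simp add: sum_nonneg_eq_0_iff)
      show ?thesis
      proof (rule that[of "\<lambda>j k. if k = sg j then p j / Pp else 0" "\<lambda>j k. Pp" "\<lambda>j k. 0"])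
        show "\<And>j k. 0 \<le> (if k = sg j then p j / Pp else 0)" using p0 Pm by simp
        show "\<And>j k. 0 \<le> Pp \<and> Pp \<le> m" "\<And>j k. 0 \<le> (0::real) \<and> 0 \<le> m" using Pm by auto
        show "(\<Sum>k\<in>UNIV. (if k = sg j then p j / Pp else 0) * Pp) = p j" for j
        proof -
          have "\<And>k. (if k = sg j then p j / Pp else 0) * Pp = (if k = sg j then p j else 0)" using Pm by auto
          then show ?thesis by simp
        qed
        show "(\<Sum>j\<in>UNIV. (if k = sg j then p j / Pp else 0) * 0) = q k" for k using qz by simp
        show "(if k = sg j then p j / Pp else 0) \<noteq> 0 \<Longrightarrow> j \<noteq> k" for j k using sg[of j] by auto
        show "(\<Sum>j\<in>UNIV. \<Sum>k\<in>UNIV. if k = sg j then p j / Pp else 0) = 1"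
          using Pm by (simp add: sum_divide_distrib[symmetric] Pp_def[symmetric])
      qed
    next
      case Q: False
      then have Pz: "Pp = 0" "Qq > 0" using False Pp0 by auto
      have Qm: "Qq = m" using Pz mPQ by auto
      have pz: "p k = 0" for k using Pz p0 unfolding Pp_def by (simp add: sum_nonneg_eq_0_iff)
      show ?thesis
      proof (rule that[of "\<lambda>j k. if j = sg k then q k / Qq else 0" "\<lambda>j k. 0" "\<lambda>j k. Qq"])
        show "\<And>j k. 0 \<le> (if j = sg k then q k / Qq else 0)" using q0 Pz by simp
        show "\<And>j k. 0 \<le> Qq \<and> Qq \<le> m" "\<And>j k. 0 \<le> (0::real) \<and> 0 \<le> m" using Qm Pz by auto
        show "(\<Sum>j\<in>UNIV. (if j = sg k then q k / Qq else 0) * Qq) = q k" for k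
        proof -
          have "\<And>j. (if j = sg k then q k / Qq else 0) * Qq = (if j = sg k then q k else 0)" using Pz by auto
          then show ?thesis by simp
        qed
        show "(\<Sum>k\<in>UNIV. (if j = sg k then q k / Qq else 0) * 0) = p j" for j using pz by simp
        show "(if j = sg k then q k / Qq else 0) \<noteq> 0 \<Longrightarrow> j \<noteq> k" for j k using sg[of k] by auto
        show "(\<Sum>j\<in>UNIV. \<Sum>k\<in>UNIV. if j = sg k then q k / Qq else 0) = 1"
          using Pz by (subst sum.swap) (simp add: sum_divide_distrib[symmetric] Qq_def[symmetric])
      qed
    qed
  qed
  define g where "g j k z = gpair (r j) (r k) (z$j) (z$k)" for j k and z :: "real^'n"
  have pw: "makespan (alg_alloc t1 t2 z) t1 t2 \<le> m * (\<Sum>j\<in>UNIV. \<Sum>k\<in>UNIV. w j k * g j k z)" for z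
  proof -
    let ?Z = "alg_alloc t1 t2 z"
    have nz: "t2$i \<noteq> 0" "t1$i \<noteq> 0" for i using pos1 pos2 by (metis less_irrefl)+
    have Zr: "?Z i = (r i < z$i)" for i unfolding alg_alloc_def r_def ..
    have eA: "(\<Sum>i\<in>UNIV. if ?Z i then t1$i else 0) = (\<Sum>i\<in>UNIV. p i * (if ?Z i then 1 else 0) + q i * (if ?Z i then r i else 0))"
      by (rule sum.cong) (auto simp: p_def q_def r_def nz)
    have eB: "(\<Sum>i\<in>UNIV. if ?Z i then 0 else t2$i) = (\<Sum>i\<in>UNIV. p i * (if ?Z i then 0 else 1 / r i) + q i * (if ?Z i then 0 else 1))"
      by (rule sum.cong) (auto simp: p_def q_def r_def nz)
    show ?thesis unfolding makespan_alt eA eB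
      by (rule pointwise_general[where g="\<lambda>j k. g j k z", OF w0 c d cp dq])
         (use r0 in \<open>auto simp: g_def gpair_def Zr less_imp_le\<close>)
  qed
  have int_g: "integrable P (g j k)" for j k
    unfolding g_def by (rule gpair_integrable[OF prob sP r0 r0])
  have "alg_makespan P t1 t2 \<le> (\<integral>z. m * (\<Sum>j\<in>UNIV. \<Sum>k\<in>UNIV. w j k * g j k z) \<partial>P)"
    unfolding alg_makespan_def
    by (rule integral_mono[OF makespan_alg_integrable[OF prob sP] _ pw]) (use int_g in auto)
  also have "\<dots> = m * (\<Sum>j\<in>UNIV. \<Sum>k\<in>UNIV. w j k * psi P j k (r j) (r k))"
  proof -
    have "(\<integral>z. (\<Sum>j\<in>UNIV. \<Sum>k\<in>UNIV. w j k * g j k z) \<partial>P) = (\<Sum>j\<in>UNIV. \<integral>z. (\<Sum>k\<in>UNIV. w j k * g j k z) \<partial>P)"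
      by (rule Bochner_Integration.integral_sum) (use int_g in auto)
    also have "\<dots> = (\<Sum>j\<in>UNIV. \<Sum>k\<in>UNIV. \<integral>z. w j k * g j k z \<partial>P)"
      by (intro sum.cong refl Bochner_Integration.integral_sum) (use int_g in auto)
    also have "\<dots> = (\<Sum>j\<in>UNIV. \<Sum>k\<in>UNIV. w j k * psi P j k (r j) (r k))"
      by (simp add: g_def integral_gpair[OF prob sP r0 r0])
    finally show ?thesis by simp
  qed
  finally have algle: "alg_makespan P t1 t2 \<le> m * (\<Sum>j\<in>UNIV. \<Sum>k\<in>UNIV. w j k * psi P j k (r j) (r k))" .
  let ?S = "(SUP p\<in>{0<..}\<times>{0<..}. ereal (phi P (fst p) (snd p)))"
  have phiS: "ereal (phi P x y) \<le> ?S" if "x > 0" "y > 0" for x y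
    by (rule SUP_upper2[where i="(x,y)"]) (use that in auto)
  show ?thesis
  proof (cases ?S)
    case (real s)
    have "(\<Sum>j\<in>UNIV. \<Sum>k\<in>UNIV. w j k * psi P j k (r j) (r k)) \<le> (\<Sum>j\<in>UNIV. \<Sum>k\<in>UNIV. w j k * s)"
    proof (intro sum_mono)
      fix j k
      show "w j k * psi P j k (r j) (r k) \<le> w j k * s"
      proof (cases "w j k = 0")
        case False
        then have "psi P j k (r j) (r k) = phi P (r j) (r k)" using H wjk r0 by blast
        moreover have "phi P (r j) (r k) \<le> s" using phiS[OF r0 r0] real by simp
        ultimately show ?thesis using w0 by (simp add: mult_left_mono)
      qed simp
    qed
    also have "\<dots> = s" using wsum by (simp add: sum_distrib_right[symmetric])
    finally have "alg_makespan P t1 t2 \<le> m * s" using algle m0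
      by (meson less_imp_le mult_left_mono order_trans)
    then have "alg_makespan P t1 t2 / m \<le> s" using m0 by (simp add: divide_le_eq mult.commute)
    then show ?thesis using real by (simp add: m_def)
  next
    case PInf then show ?thesis by simp
  next
    case MInf then show ?thesis using phiS[of 1 1] by simp
  qed
qed

lemma idx_neq:
  assumes "CARD('n::finite) \<ge> 2"
  shows "idx1 \<noteq> (idx2::'n)"
proof -
  have "\<exists>j::'n. j \<noteq> idx1"
  proof (rule ccontr)
    assume "\<not> ?thesis"
    then have "(UNIV::'n set) = {idx1}" by auto
    then have "card (UNIV::'n set) = card {idx1::'n}" by (simp only:)
    then show False using assms by simp
  qed
  then show ?thesis unfolding idx2_def by (metis (mono_tags) someI_ex)
qed

lemma perm_exists:
  assumes "a \<noteq> b" "j \<noteq> k"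
  shows "\<exists>p. p permutes (UNIV::'n set) \<and> p a = j \<and> p b = k"
proof -
  define s1 where "s1 = Transposition.transpose a j"
  define p where "p = Transposition.transpose (s1 b) k \<circ> s1"
  have "p permutes UNIV" unfolding p_def s1_def
    by (intro permutes_compose permutes_swap_id) auto
  moreover have "p a = j" unfolding p_def s1_def using assms
    by (simp add: Transposition.transpose_def) blast
  moreover have "p b = k" unfolding p_def s1_def using assms
    by (auto simp: Transposition.transpose_def)
  ultimately show ?thesis by blast
qed

lemma permv_meas[measurable]: "permv p \<in> borel_measurable borel"
proof -
  have "continuous_on UNIV (permv p)" unfolding permv_def
    by (intro continuous_on_vec_lambda continuous_on_component continuous_on_id)
  then show ?thesis by (rule borel_measurable_continuous_onI)
qed

lemma permv_pre1: "permv p -` {z. z$a \<le> x} = {z. z$(p a) \<le> x}"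
  by (auto simp: permv_def)
lemma permv_pre2: "permv p -` {z. z$a \<le> x \<and> z$b \<le> y} = {z. z$(p a) \<le> x \<and> z$(p b) \<le> y}"
  by (auto simp: permv_def)

lemma Cn_inv:
  assumes "P \<in> Cn" "p permutes UNIV" "S \<in> sets borel"
  shows "measure P (permv p -` S) = measure P S"
proof -
  have sP: "sets P = sets borel" and eq: "distr P borel (permv p) = P"
    using assms unfolding Cn_def Pn_def permv_def[abs_def] by auto
  have sp: "space P = UNIV" using sets_eq_imp_space_eq[OF sP] by simp
  have "measure P S = measure (distr P borel (permv p)) S" using eq by simp
  also have "\<dots> = measure P (permv p -` S \<inter> space P)"
    by (rule measure_distr) (use assms(3) sP in auto)
  finally show ?thesis using sp by simp
qed

lemma Cn_psi:
  fixes P :: "(real^'n::finite) measure"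
  assumes "P \<in> Cn" "idx1 \<noteq> (idx2::'n)" "j \<noteq> k"
  shows "psi P j k x y = phi P x y"
proof -
  obtain p where p: "p permutes (UNIV::'n set)" "p idx1 = j" "p idx2 = k"
    using perm_exists[OF assms(2,3)] by blast
  obtain p' where p': "p' permutes (UNIV::'n set)" "p' idx1 = k" "p' idx2 = j"
    using perm_exists[OF assms(2)] assms(3) by metis
  have "measure P {z. z$j \<le> x} = Fm P x"
    using Cn_inv[OF assms(1) p(1), of "{z. z$idx1 \<le> x}"] unfolding Fm_def permv_pre1 p by simp
  moreover have "measure P {z. z$k \<le> y} = Fm P y"
    using Cn_inv[OF assms(1) p'(1), of "{z. z$idx1 \<le> y}"] unfolding Fm_def permv_pre1 p' by simp
  moreover have "measure P {z. z$j \<le> x \<and> z$k \<le> y} = Hm P x y"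
    using Cn_inv[OF assms(1) p(1), of "{z. z$idx1 \<le> x \<and> z$idx2 \<le> y}"] unfolding Hm_def permv_pre2 p by simp
  ultimately show ?thesis unfolding psi_def phi_def by simp
qed

lemma avg_affine:
  fixes a b h :: "'a \<Rightarrow> real"
  assumes "finite S" "card S > 0"
  shows "(\<Sum>p\<in>S. K - c1 * a p - c2 * b p + c3 * h p) / card S
     = K - c1 * ((\<Sum>p\<in>S. a p) / card S) - c2 * ((\<Sum>p\<in>S. b p) / card S) + c3 * ((\<Sum>p\<in>S. h p) / card S)"
proof -
  have "(\<Sum>p\<in>S. K - c1 * a p - c2 * b p + c3 * h p) = card S * K - c1 * (\<Sum>p\<in>S. a p) - c2 * (\<Sum>p\<in>S. b p) + c3 * (\<Sum>p\<in>S. h p)" (is "?L = _")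
    by (simp add: sum.distrib sum_subtractf sum_distrib_left)
  then show ?thesis unfolding \<open>?L = _\<close> using assms by (auto simp: add_divide_distrib diff_divide_distrib)
qed

lemma permv_comp: "permv p -` (permv s -` A) = permv (p \<circ> s) -` A"
  by (auto simp: permv_def)

lemma norm_permv:
  assumes "p permutes (UNIV::'n::finite set)"
  shows "norm (permv p v) = norm v"
proof -
  have "(\<Sum>i\<in>UNIV. (norm (v $ p i))\<^sup>2) = (\<Sum>i\<in>UNIV. (norm (v $ i))\<^sup>2)"
    using sum.permute[OF assms, of "\<lambda>i. (norm (v $ i))\<^sup>2"] by (simp add: comp_def)
  then show ?thesis unfolding norm_vec_def L2_set_def permv_def by simp
qed

lemma dist_permv:
  assumes "p permutes (UNIV::'n::finite set)"
  shows "dist (permv p z) (permv p y) = dist z y"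
proof -
  have "permv p z - permv p y = permv p (z - y)" by (simp add: permv_def vec_eq_iff)
  then show ?thesis unfolding dist_norm using norm_permv[OF assms] by simp
qed

lemma permv_permv: "permv s (permv p z) = permv (p \<circ> s) z"
  by (simp add: permv_def vec_eq_iff)

lemma permv_inv:
  assumes "p permutes (UNIV::'n::finite set)"
  shows "permv p (permv (inv p) x) = x"
  unfolding permv_permv using permutes_inv_o(2)[OF assms] by (simp add: permv_def vec_eq_iff)

lemma permv_orthant:
  assumes "p permutes (UNIV::'n::finite set)" "x \<notin> orthant"
  shows "permv (inv p) x \<notin> orthant"
proof -
  obtain i where i: "\<not> 0 < x $ i" using assms(2) unfolding orthant_def by auto
  have "permv (inv p) x $ p i = x $ i" using permutes_inverses(2)[OF assms(1)] by (simp add: permv_def)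
  then show ?thesis using i unfolding orthant_def by (metis (mono_tags) mem_Collect_eq)
qed

lemma symmetrize:
  fixes P :: "(real^'n::finite) measure"
  assumes PP: "P \<in> Pn" and i12: "idx1 \<noteq> (idx2::'n)"
  shows "\<exists>Q\<in>(Cn :: (real^'n) measure set). (SUP p\<in>{0<..}\<times>{0<..}. ereal (phi Q (fst p) (snd p))) \<le> worst_ratio P"
proof -
  have prob: "prob_space P" and sP: "sets P = sets borel" and supp: "msupp P \<subseteq> orthant"
    using PP unfolding Pn_def by auto
  interpret P: prob_space P by fact
  have spP: "space P = UNIV" using sets_eq_imp_space_eq[OF sP] by simp
  define Perms where "Perms = {p. p permutes (UNIV::'n set)}"
  have fin: "finite Perms" unfolding Perms_def by (rule finite_permutations) simp
  have ne: "Perms \<noteq> {}" unfolding Perms_def using permutes_id by blast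
  define N where "N = card Perms"
  have N0: "N > 0" unfolding N_def using fin ne by (simp add: card_gt_0_iff)
  define U where "U = pmf_of_set Perms"
  define K where "K p = distr P borel (permv p)" for p
  define Q where "Q = measure_pmf U \<bind> K"
  have probK: "prob_space (K p)" for p unfolding K_def by (rule P.prob_space_distr) (simp add: measurable_cong_sets[OF sP refl])
  have Kmeas: "K \<in> measure_pmf U \<rightarrow>\<^sub>M subprob_algebra borel"
    unfolding measurable_pmf_measure1 using probK by (auto simp: space_subprob_algebra K_def prob_space_imp_subprob_space)
  have sQ: "sets Q = sets borel" unfolding Q_def by (rule sets_bind_measurable[OF Kmeas]) simp
  have spQ: "space Q = UNIV" using sets_eq_imp_space_eq[OF sQ] by simp
  have probQ: "prob_space Q" unfolding Q_def
    by (rule measure_pmf.prob_space_bind) (use probK Kmeas in auto)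
  have pre_borel: "permv p -` A \<in> sets borel" if "A \<in> sets borel" for p :: "'n \<Rightarrow> 'n" and A :: "(real^'n) set"
    using measurable_sets[OF permv_meas that, of p] by simp
  have eQ: "emeasure Q A = (\<Sum>p\<in>Perms. emeasure P (permv p -` A)) / of_nat N" if A: "A \<in> sets borel" for A
  proof -
    have "emeasure Q A = \<integral>\<^sup>+ p. emeasure (K p) A \<partial>measure_pmf U"
      unfolding Q_def by (rule emeasure_bind[OF _ Kmeas A]) simp
    also have "\<dots> = (\<Sum>p\<in>Perms. emeasure (K p) A) / of_nat N"
      unfolding U_def N_def by (rule nn_integral_pmf_of_set[OF ne fin])
    also have "(\<Sum>p\<in>Perms. emeasure (K p) A) = (\<Sum>p\<in>Perms. emeasure P (permv p -` A))"
      unfolding K_def by (intro sum.cong refl, subst emeasure_distr)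
         (auto simp: measurable_cong_sets[OF sP refl] A spP)
    finally show ?thesis .
  qed
  have mQ: "measure Q A = (\<Sum>p\<in>Perms. measure P (permv p -` A)) / N" if A: "A \<in> sets borel" for A
  proof -
    have "emeasure Q A = (\<Sum>p\<in>Perms. ennreal (measure P (permv p -` A))) / ennreal N"
      unfolding eQ[OF A] by (simp add: P.emeasure_eq_measure ennreal_of_nat_eq_real_of_nat)
    also have "\<dots> = ennreal ((\<Sum>p\<in>Perms. measure P (permv p -` A)) / N)"
      using N0 by (simp add: sum_ennreal divide_ennreal sum_nonneg)
    finally show ?thesis unfolding measure_def by (simp add: sum_nonneg)
  qed
  have QC: "Q \<in> Cn"
  proof -
    have inv: "distr Q borel (\<lambda>z. \<chi> i. z $ s i) = Q" if s: "s permutes UNIV" for s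
    proof (rule measure_eqI)
      show "sets (distr Q borel (\<lambda>z. \<chi> i. z $ s i)) = sets Q" using sQ by simp
      fix A assume "A \<in> sets (distr Q borel (\<lambda>z. \<chi> i. z $ s i))"
      then have A: "A \<in> sets borel" by simp
      have "emeasure (distr Q borel (permv s)) A = emeasure Q (permv s -` A)"
        by (subst emeasure_distr) (auto simp: measurable_cong_sets[OF sQ refl] A spQ)
      also have "\<dots> = (\<Sum>p\<in>Perms. emeasure P (permv (p \<circ> s) -` A)) / of_nat N"
        unfolding eQ[OF pre_borel[OF A]] permv_comp ..
      also have "(\<Sum>p\<in>Perms. emeasure P (permv (p \<circ> s) -` A)) = (\<Sum>p\<in>Perms. emeasure P (permv p -` A))"
        unfolding Perms_def by (rule sum_permutations_compose_right[OF s, symmetric])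
      finally have "emeasure (distr Q borel (permv s)) A = emeasure Q A" by (simp only: eQ[OF A])
      moreover have "(\<lambda>z. \<chi> i. z $ s i) = permv s" unfolding permv_def[abs_def] ..
      ultimately show "emeasure (distr Q borel (\<lambda>z. \<chi> i. z $ s i)) A = emeasure Q A"
        by simp
    qed
    have "msupp Q \<subseteq> orthant"
    proof
      fix x assume xQ: "x \<in> msupp Q"
      show "x \<in> orthant"
      proof (rule ccontr)
        assume xo: "x \<notin> orthant"
        define yy where "yy p = permv (inv p) x" for p
        have "\<exists>e>0. emeasure P (ball (yy p) e) = 0" if "p \<in> Perms" for p
        proof -
          have "yy p \<notin> orthant" unfolding yy_def using permv_orthant[OF _ xo] that Perms_def by auto
          then have "yy p \<notin> msupp P" using supp by auto
          then show ?thesis unfolding msupp_def by (auto simp: not_less)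
        qed
        then obtain E where E: "\<And>p. p \<in> Perms \<Longrightarrow> E p > 0 \<and> emeasure P (ball (yy p) (E p)) = 0"
          by metis
        define e where "e = Min (E ` Perms)"
        have e0: "e > 0" unfolding e_def using fin ne E by (subst Min_gr_iff) auto
        have eE: "e \<le> E p" if "p \<in> Perms" for p unfolding e_def using fin that by (intro Min_le) auto
        have "emeasure Q (ball x e) = (\<Sum>p\<in>Perms. emeasure P (permv p -` ball x e)) / of_nat N"
          by (rule eQ) simp
        also have "(\<Sum>p\<in>Perms. emeasure P (permv p -` ball x e)) = 0"
        proof (rule sum.neutral, rule ballI)
          fix p assume p: "p \<in> Perms"
          have pp: "p permutes UNIV" using p unfolding Perms_def by simp
          have "permv p -` ball x e \<subseteq> ball (yy p) (E p)"
          proof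
            fix z assume "z \<in> permv p -` ball x e"
            then have "dist x (permv p z) < e" by simp
            moreover have "dist x (permv p z) = dist (yy p) z"
              unfolding yy_def using dist_permv[OF pp, of "permv (inv p) x" z] permv_inv[OF pp] by simp
            ultimately show "z \<in> ball (yy p) (E p)" using eE[OF p] by simp
          qed
          then have "emeasure P (permv p -` ball x e) \<le> emeasure P (ball (yy p) (E p))"
            by (intro emeasure_mono) (auto simp: sP)
          then show "emeasure P (permv p -` ball x e) = 0" using E[OF p] by simp
        qed
        finally have "emeasure Q (ball x e) = 0" by simp
        then show False using xQ e0 unfolding msupp_def by auto
      qed
    qed
    then show ?thesis using inv probQ sQ unfolding Cn_def Pn_def by auto
  qed
  have bound: "ereal (phi Q x y) \<le> worst_ratio P" if xy: "x > 0" "y > 0" for x y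
  proof -
    have "phi Q x y = psi Q idx1 idx2 x y" using Cn_psi[OF QC i12 i12] by simp
    also have "\<dots> = (\<Sum>p\<in>Perms. psi P (p idx1) (p idx2) x y) / N"
      unfolding psi_def mQ[OF sets_le1] mQ[OF sets_le2] permv_pre1 permv_pre2 N_def
      by (rule avg_affine[symmetric]) (use fin N0 in \<open>auto simp: N_def\<close>)
    finally have eq: "phi Q x y = (\<Sum>p\<in>Perms. psi P (p idx1) (p idx2) x y) / N" .
    have each: "ereal (psi P (p idx1) (p idx2) x y) \<le> worst_ratio P" if "p \<in> Perms" for p
    proof (rule psi_le_worst[OF prob sP _ xy])
      show "p idx1 \<noteq> p idx2" using i12 permutes_inj[of p UNIV] that unfolding Perms_def by (simp add: inj_eq)
    qed
    show ?thesis
    proof (cases "worst_ratio P")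
      case (real w)
      have "(\<Sum>p\<in>Perms. psi P (p idx1) (p idx2) x y) \<le> (\<Sum>p\<in>Perms. w)"
        by (rule sum_mono) (use each real in auto)
      then have "(\<Sum>p\<in>Perms. psi P (p idx1) (p idx2) x y) / N \<le> w"
        using N0 by (simp add: N_def divide_le_eq mult.commute)
      then show ?thesis using eq real by simp
    next
      case PInf then show ?thesis by simp
    next
      case MInf then show ?thesis using each[of id] permutes_id by (simp add: Perms_def)
    qed
  qed
  have "(SUP p\<in>{0<..}\<times>{0<..}. ereal (phi Q (fst p) (snd p))) \<le> worst_ratio P"
    by (rule SUP_least) (use bound in auto)
  then show ?thesis using QC by (rule bexI)
qed

theorem corollary3:
  assumes "CARD('n::finite) \<ge> 2"
  shows "Rn TYPE('n) =
    (INF M \<in> (Cn :: (real^'n) measure set).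
       SUP p \<in> {0<..} \<times> {0<..}. ereal (phi M (fst p) (snd p)))"
proof -
  have i12: "idx1 \<noteq> (idx2::'n)" by (rule idx_neq[OF assms])
  have up: "worst_ratio Q \<le> (SUP p \<in> {0<..} \<times> {0<..}. ereal (phi Q (fst p) (snd p)))"
    if Q: "Q \<in> (Cn :: (real^'n) measure set)" for Q
  proof -
    have prob: "prob_space Q" and sQ: "sets Q = sets borel" using Q unfolding Cn_def Pn_def by auto
    show ?thesis unfolding worst_ratio_def
    proof (rule SUP_least)
      fix pr :: "(real^'n) \<times> (real^'n)" assume "pr \<in> pos_inst"
      then show "ereal (alg_makespan Q (fst pr) (snd pr) / opt_makespan (fst pr) (snd pr))
          \<le> (SUP p \<in> {0<..} \<times> {0<..}. ereal (phi Q (fst p) (snd p)))"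
        by (intro upper_bound[OF prob sQ i12] Cn_psi[OF Q i12]) (auto simp: pos_inst_def)
    qed
  qed
  show ?thesis unfolding Rn_def
  proof (rule antisym)
    show "(INF M \<in> (Pn :: (real^'n) measure set). worst_ratio M) \<le>
      (INF M \<in> (Cn :: (real^'n) measure set). SUP p \<in> {0<..} \<times> {0<..}. ereal (phi M (fst p) (snd p)))"
    proof (rule INF_greatest)
      fix Q :: "(real^'n) measure" assume Q: "Q \<in> Cn"
      then have "Q \<in> Pn" unfolding Cn_def by auto
      then have "(INF M \<in> (Pn :: (real^'n) measure set). worst_ratio M) \<le> worst_ratio Q" by (rule INF_lower)
      also have "\<dots> \<le> (SUP p \<in> {0<..} \<times> {0<..}. ereal (phi Q (fst p) (snd p)))" by (rule up[OF Q])
      finally show "(INF M \<in> (Pn :: (real^'n) measure set). worst_ratio M) \<le> (SUP p \<in> {0<..} \<times> {0<..}. ereal (phi Q (fst p) (snd p)))" .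
    qed
  next
    show "(INF M \<in> (Cn :: (real^'n) measure set). SUP p \<in> {0<..} \<times> {0<..}. ereal (phi M (fst p) (snd p)))
       \<le> (INF M \<in> (Pn :: (real^'n) measure set). worst_ratio M)"
    proof (rule INF_greatest)
      fix P :: "(real^'n) measure" assume P: "P \<in> Pn"
      obtain Q where Q: "Q \<in> (Cn :: (real^'n) measure set)"
        and le: "(SUP p\<in>{0<..}\<times>{0<..}. ereal (phi Q (fst p) (snd p))) \<le> worst_ratio P"
        using symmetrize[OF P i12] by blast
      have "(INF M \<in> (Cn :: (real^'n) measure set). SUP p \<in> {0<..} \<times> {0<..}. ereal (phi M (fst p) (snd p)))
          \<le> (SUP p\<in>{0<..}\<times>{0<..}. ereal (phi Q (fst p) (snd p)))" by (rule INF_lower[OF Q])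
      also note le
      finally show "(INF M \<in> (Cn :: (real^'n) measure set). SUP p \<in> {0<..} \<times> {0<..}. ereal (phi M (fst p) (snd p)))
          \<le> worst_ratio P" .
    qed
  qed
qed

end
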